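(* Let $\mathbb{X},\mathbb{Y}$ be real Banach spaces such that $\operatorname{Sm}\mathbb{X}$ is dense in $\mathbb{X}$. If a non-zero bounded linear operator $T:\mathbb{X}\to\mathbb{Y}$ preserves Birkhoff–James orthogonality at each $x\in\operatorname{Sm}\mathbb{X}$, then $T$ is injective.
   Context: $u\perp_B v$ means $\|u+\lambda v\|\ge\|u\|$ for all real $\lambda$. $T$ preserves Birkhoff–James orthogonality at $x$ if $x\perp_B v$ implies $Tx\perp_B Tv$ for all $v\in\mathbb{X}$. For non-zero $z$, $J(z)=\{f\in\mathbb{X}^*:\|f\|=1,\ f(z)=\|z\|\}$; $z$ is smooth if $J(z)$ is a singleton; $\operatorname{Sm}\mathbb{X}$ is the set of smooth points. *)

theory Defs
  imports "HOL-Analysis.Analysis"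
begin

definition bj_orth :: "'a::real_normed_vector \<Rightarrow> 'a \<Rightarrow> bool" where
  "bj_orth u v \<longleftrightarrow> (\<forall>t::real. norm (u + t *\<^sub>R v) \<ge> norm u)"

definition preserves_bj_at :: "('a::real_normed_vector \<Rightarrow> 'b::real_normed_vector) \<Rightarrow> 'a \<Rightarrow> bool" where
  "preserves_bj_at T x \<longleftrightarrow> (\<forall>v. bj_orth x v \<longrightarrow> bj_orth (T x) (T v))"

definition support_functionals :: "'a::real_normed_vector \<Rightarrow> ('a \<Rightarrow> real) set" where
  "support_functionals z = {f. bounded_linear f \<and> onorm f = 1 \<and> f z = norm z}"

definition smooth_point :: "'a::real_normed_vector \<Rightarrow> bool" where
  "smooth_point z \<longleftrightarrow> z \<noteq> 0 \<and> (\<exists>f. support_functionals z = {f})"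

definition smooth_points :: "'a::real_normed_vector set" where
  "smooth_points = {z. smooth_point z}"

end

theory Submission
  imports Defs
begin

lemma smooth_orth:
  fixes x :: "'a::real_normed_vector"
  assumes "bounded_linear f" "onorm f = 1" "f x = norm x" "f y = 0"
  shows "bj_orth x y"
  unfolding bj_orth_def
proof
  fix t :: real
  interpret f: bounded_linear f by fact
  have "norm (f (x + t *\<^sub>R y)) \<le> onorm f * norm (x + t *\<^sub>R y)"
    using onorm assms(1) by blast
  moreover have "f (x + t *\<^sub>R y) = norm x" using assms by (simp add: f.add f.scale)
  ultimately show "norm x \<le> norm (x + t *\<^sub>R y)" using assms(2) by simp
qed

lemma kill_smooth:
  fixes T :: "'a::real_normed_vector \<Rightarrow> 'b::real_normed_vector"
  assumes T: "bounded_linear T" and pres: "preserves_bj_at T x"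
    and sm: "smooth_point x" and Tv: "T v = 0" and close: "norm (x - v) < norm v / 2"
  shows "T x = 0"
proof -
  interpret T: bounded_linear T by fact
  from sm obtain f where x0: "x \<noteq> 0" and J: "support_functionals x = {f}"
    unfolding smooth_point_def by auto
  hence fb: "bounded_linear f" "onorm f = 1" "f x = norm x"
    unfolding support_functionals_def by auto
  interpret f: bounded_linear f by fact
  have nb: "norm (f (v - x)) \<le> norm (v - x)"
    using onorm[OF fb(1)] fb(2) by simp
  have "norm v \<le> norm x + norm (x - v)" using norm_triangle_ineq[of x "v - x"] by (simp add: norm_minus_commute)
  hence "norm (v - x) < norm x" using close by (simp add: norm_minus_commute)
  moreover have "f v = norm x + f (v - x)" using fb by (simp add: f.diff)
  ultimately have fv: "f v > 0" using nb unfolding real_norm_def by linarith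
  have nx: "norm x > 0" using x0 by simp
  define a where "a = f v / norm x"
  have a0: "a \<noteq> 0" using fv nx by (simp add: a_def)
  have "f (v - a *\<^sub>R x) = 0" using fb nx by (simp add: f.diff f.scale a_def)
  hence "bj_orth x (v - a *\<^sub>R x)" using smooth_orth fb by blast
  hence "bj_orth (T x) (T (v - a *\<^sub>R x))" using pres unfolding preserves_bj_at_def by blast
  hence "bj_orth (T x) (- a *\<^sub>R T x)" using Tv by (simp add: T.diff T.scale)
  hence "norm (T x + (1/a) *\<^sub>R (- a *\<^sub>R T x)) \<ge> norm (T x)" unfolding bj_orth_def by blast
  thus ?thesis using a0 by simp
qed

theorem mainTheorem4:
  fixes T :: "'a::banach \<Rightarrow> 'b::banach"
  assumes "closure (smooth_points :: 'a set) = UNIV"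
    and "bounded_linear T"
    and "T \<noteq> (\<lambda>x. 0)"
    and "\<forall>x \<in> smooth_points. preserves_bj_at T x"
  shows "inj T"
proof -
  interpret T: bounded_linear T by fact
  have ker: "v = 0" if Tv: "T v = 0" for v
  proof (rule ccontr)
    assume v0: "v \<noteq> 0"
    define r where "r = norm v / 2"
    have r0: "r > 0" using v0 by (simp add: r_def)
    have Z: "T x = 0" if "x \<in> ball v r \<inter> smooth_points" for x
      using that kill_smooth[OF assms(2) _ _ Tv] assms(4)
      by (auto simp: smooth_points_def r_def dist_norm norm_minus_commute)
    have cl: "closed {z. T z = 0}"
      by (rule closed_Collect_eq) (auto intro: T.continuous_on continuous_on_id)
    have "ball v r \<subseteq> closure (ball v r \<inter> smooth_points)"
      using open_Int_closure_subset[of "ball v r" smooth_points] assms(1) by auto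
    also have "\<dots> \<subseteq> {z. T z = 0}"
      using Z cl by (intro closure_minimal) auto
    finally have B: "\<And>z. z \<in> ball v r \<Longrightarrow> T z = 0" by blast
    have "T w = 0" for w
    proof -
      define s where "s = r / (2 * (norm w + 1))"
      have s0: "s > 0" using r0 unfolding s_def by (intro divide_pos_pos) (auto, smt (verit) norm_ge_zero)
      have "norm (s *\<^sub>R w) = r * norm w / (2 * (norm w + 1))"
        using s0 r0 by (simp add: s_def abs_of_pos)
      also have "\<dots> < r" using r0 norm_ge_zero[of w]
        by (simp add: divide_less_eq) (smt (verit) norm_ge_zero)
      finally have "v + s *\<^sub>R w \<in> ball v r" by (simp add: dist_norm)
      hence "T (v + s *\<^sub>R w) = 0" by (rule B)
      thus ?thesis using Tv s0 by (simp add: T.add T.scale)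
    qed
    thus False using assms(3) by auto
  qed
  show ?thesis
    by (rule injI) (metis T.diff ker eq_iff_diff_eq_0)
qed

end
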